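(* Suppose $\mathcal W$ is a locally minimal Banach space with a Schauder basis $(e_n)$. Then $\mathcal W$, with respect to the basis $(e_n)$, is $\omega^2$-minimal.
   Context: $\mathcal W$ is locally minimal if there is a constant $K\ge1$ such that for every finite-dimensional subspace $\mathcal F\subseteq\mathcal W$ and every infinite-dimensional subspace $\mathcal Y\subseteq\mathcal W$, $\mathcal F$ embeds into $\mathcal Y$ by an isomorphism $T$ with $\|T\|\|T^{-1}\|\le K$. For sequences $(x_i)_{i\le k},(y_i)_{i\le k}$ and $K\ge1$, $(x_i)\sim_K(y_i)$ means $\frac1K\|\sum_i a_ix_i\|\le\|\sum_i a_iy_i\|\le K\|\sum_i a_ix_i\|$ for all real $a_i$. For a basic sequence $(y_n)$ and a Banach space $\mathcal Y$, $T((y_n),\mathcal Y,K)$ is the tree of all finite sequences $(v_0,\dots,v_k)$ in $\mathcal Y$, including the empty one, with $(v_0,\dots,v_k)\sim_K(y_0,\dots,y_k)$. For a well-founded tree $T$, $\rho_T(s)=\sup\{\rho_T(t)+1:s\prec t\in T\}$ ($0$ at terminal nodes) and ${\rm rank}(T)=\sup\{\rho_T(s)+1:s\in T\}$; for ill-founded $T$, ${\rm rank}(T)=\infty>\alpha$ for all ordinals $\alpha$. ${\rm Emb}((y_n),\mathcal Y)=\sup_{K\ge1}{\rm rank}(T((y_n),\mathcal Y,K))$. A space $\mathcal W$ with Schauder basis $(e_n)$ is $\beta$-minimal if for every block basis $(z_n)$ of $(e_n)$ and every infinite-dimensional closed subspace $\mathcal Y\subseteq\mathcal W$, ${\rm Emb}((z_n),\mathcal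 Y)\ge\beta$. *)

theory Defs
  imports "HOL-Analysis.Analysis" "HOL-Library.Sublist"
begin

definition schauder_basis :: "(nat \<Rightarrow> 'a::banach) \<Rightarrow> bool" where
  "schauder_basis e \<longleftrightarrow>
     (\<forall>x. \<exists>!a :: nat \<Rightarrow> real. (\<lambda>N. \<Sum>i<N. a i *\<^sub>R e i) \<longlonglongrightarrow> x)"

definition block_basis :: "(nat \<Rightarrow> 'a::real_normed_vector) \<Rightarrow> (nat \<Rightarrow> 'a) \<Rightarrow> bool" where
  "block_basis e z \<longleftrightarrow>
     (\<exists>(p :: nat \<Rightarrow> nat) (a :: nat \<Rightarrow> real). strict_mono p \<and>
        (\<forall>n. z n = (\<Sum>i\<in>{p n..<p (Suc n)}. a i *\<^sub>R e i) \<and> z n \<noteq> 0))"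

definition fin_dim_subspace :: "'a::real_vector set \<Rightarrow> bool" where
  "fin_dim_subspace F \<longleftrightarrow> subspace F \<and> (\<exists>B. finite B \<and> F = span B)"

definition inf_dim_subspace :: "'a::real_vector set \<Rightarrow> bool" where
  "inf_dim_subspace Y \<longleftrightarrow> subspace Y \<and> \<not> (\<exists>B. finite B \<and> Y = span B)"

text \<open>F embeds into Y by an isomorphism T (onto its image) with
  \<open>\<parallel>T\<parallel>\<parallel>T\<^sup>-\<^sup>1\<parallel> \<le> K\<close>; A and B play the roles of \<open>\<parallel>T\<parallel>\<close> and \<open>\<parallel>T\<^sup>-\<^sup>1\<parallel>\<close>.\<close>
definition embeds_with_const :: "'a::real_normed_vector set \<Rightarrow> 'a set \<Rightarrow> real \<Rightarrow> bool" where
  "embeds_with_const F Y K \<longleftrightarrow>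
     (\<exists>(T :: 'a \<Rightarrow> 'a) (A :: real) (B :: real).
        (\<forall>x\<in>F. \<forall>y\<in>F. T (x + y) = T x + T y) \<and>
        (\<forall>c. \<forall>x\<in>F. T (c *\<^sub>R x) = c *\<^sub>R T x) \<and>
        T ` F \<subseteq> Y \<and> A * B \<le> K \<and>
        (\<forall>x\<in>F. norm (T x) \<le> A * norm x \<and> norm x \<le> B * norm (T x)))"

definition locally_minimal :: "'a::real_normed_vector set \<Rightarrow> bool" where
  "locally_minimal W \<longleftrightarrow>
     (\<exists>K\<ge>1. \<forall>F Y. fin_dim_subspace F \<longrightarrow> F \<subseteq> W \<longrightarrow>
                   inf_dim_subspace Y \<longrightarrow> Y \<subseteq> W \<longrightarrow> embeds_with_const F Y K)"

definition seq_equiv :: "real \<Rightarrow> 'a::real_normed_vector list \<Rightarrow> 'a list \<Rightarrow> bool" where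
  "seq_equiv K xs ys \<longleftrightarrow> length xs = length ys \<and>
     (\<forall>a :: nat \<Rightarrow> real.
        (1 / K) * norm (\<Sum>i<length xs. a i *\<^sub>R xs ! i) \<le> norm (\<Sum>i<length ys. a i *\<^sub>R ys ! i) \<and>
        norm (\<Sum>i<length ys. a i *\<^sub>R ys ! i) \<le> K * norm (\<Sum>i<length xs. a i *\<^sub>R xs ! i))"

definition emb_tree :: "(nat \<Rightarrow> 'a::real_normed_vector) \<Rightarrow> 'a set \<Rightarrow> real \<Rightarrow> 'a list set" where
  "emb_tree y Y K = {vs. set vs \<subseteq> Y \<and> seq_equiv K vs (map y [0..<length vs])}"

definition ill_founded :: "'b list set \<Rightarrow> bool" where
  "ill_founded T \<longleftrightarrow> (\<exists>v :: nat \<Rightarrow> 'b. \<forall>k. map v [0..<k] \<in> T)"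

text \<open>\<open>rho_ge T m n s\<close> expresses \<open>\<rho>\<^sub>T(s) \<ge> \<omega>\<cdot>m + n\<close> (for s \<in> T), via the
  standard recursion: \<open>\<rho>(s) \<ge> \<alpha>+1\<close> iff some proper extension t \<in> T of s has
  \<open>\<rho>(t) \<ge> \<alpha>\<close>; \<open>\<rho>(s) \<ge> \<omega>\<cdot>(m+1)\<close> iff \<open>\<rho>(s) \<ge> \<omega>\<cdot>m+n\<close> for all n.\<close>
fun rho_ge :: "'b list set \<Rightarrow> nat \<Rightarrow> nat \<Rightarrow> 'b list \<Rightarrow> bool" where
  "rho_ge T 0 0 s = (s \<in> T)"
| "rho_ge T (Suc m) 0 s = (s \<in> T \<and> (\<forall>n. rho_ge T m n s))"
| "rho_ge T m (Suc n) s = (s \<in> T \<and> (\<exists>t\<in>T. strict_prefix s t \<and> rho_ge T m n t))"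

text \<open>\<open>rank(T) > \<omega>\<cdot>m + n\<close>, i.e. some node s has \<open>\<rho>\<^sub>T(s) + 1 > \<omega>\<cdot>m+n\<close>.\<close>
definition rank_gt :: "'b list set \<Rightarrow> nat \<Rightarrow> nat \<Rightarrow> bool" where
  "rank_gt T m n \<longleftrightarrow> (\<exists>s\<in>T. rho_ge T m n s)"

text \<open>\<open>Emb((y_n),Y) = sup\<^sub>K rank(T((y_n),Y,K)) \<ge> \<omega>\<^sup>2\<close>: either some tree is
  ill-founded (rank \<infinity>), or for every \<open>\<alpha> = \<omega>\<cdot>m+n < \<omega>\<^sup>2\<close> some tree has rank \<open>> \<alpha>\<close>.\<close>
definition Emb_ge_omega2 :: "(nat \<Rightarrow> 'a::real_normed_vector) \<Rightarrow> 'a set \<Rightarrow> bool" where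
  "Emb_ge_omega2 y Y \<longleftrightarrow>
     (\<exists>K\<ge>1. ill_founded (emb_tree y Y K)) \<or>
     (\<forall>m n. \<exists>K\<ge>1. rank_gt (emb_tree y Y K) m n)"

definition omega2_minimal :: "(nat \<Rightarrow> 'a::real_normed_vector) \<Rightarrow> bool" where
  "omega2_minimal e \<longleftrightarrow>
     (\<forall>z Y. block_basis e z \<longrightarrow> closed Y \<longrightarrow> inf_dim_subspace Y \<longrightarrow> Emb_ge_omega2 z Y)"

end

theory Submission
  imports Defs
begin


locale sbasis =
  fixes e :: "nat \<Rightarrow> 'a::banach"
  assumes sb: "schauder_basis e"
begin

definition coef :: "'a \<Rightarrow> nat \<Rightarrow> real" where
  "coef x = (THE a. (\<lambda>N. \<Sum>i<N. a i *\<^sub>R e i) \<longlonglongrightarrow> x)"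

definition S :: "nat \<Rightarrow> 'a \<Rightarrow> 'a" where
  "S N x = (\<Sum>i<N. coef x i *\<^sub>R e i)"

lemma coef_lim: "(\<lambda>N. S N x) \<longlonglongrightarrow> x"
proof -
  from sb have "\<exists>!a. (\<lambda>N. \<Sum>i<N. a i *\<^sub>R e i) \<longlonglongrightarrow> x" unfolding schauder_basis_def by blast
  then have "(\<lambda>N. \<Sum>i<N. coef x i *\<^sub>R e i) \<longlonglongrightarrow> x" unfolding coef_def by (rule theI')
  then show ?thesis unfolding S_def .
qed

lemma coef_unique: "(\<lambda>N. \<Sum>i<N. a i *\<^sub>R e i) \<longlonglongrightarrow> x \<Longrightarrow> coef x = a"
proof -
  assume h: "(\<lambda>N. \<Sum>i<N. a i *\<^sub>R e i) \<longlonglongrightarrow> x"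
  from sb have ex: "\<exists>!a. (\<lambda>N. \<Sum>i<N. a i *\<^sub>R e i) \<longlonglongrightarrow> x" unfolding schauder_basis_def by blast
  show ?thesis unfolding coef_def using the1_equality[OF ex] h by blast
qed

lemma coef_add: "coef (x + y) = (\<lambda>i. coef x i + coef y i)"
proof (rule coef_unique)
  have "(\<lambda>N. S N x + S N y) \<longlonglongrightarrow> x + y" by (intro tendsto_add coef_lim)
  then show "(\<lambda>N. \<Sum>i<N. (coef x i + coef y i) *\<^sub>R e i) \<longlonglongrightarrow> x + y"
    by (simp add: S_def scaleR_add_left sum.distrib)
qed

lemma coef_scale: "coef (c *\<^sub>R x) = (\<lambda>i. c * coef x i)"
proof (rule coef_unique)
  have "(\<lambda>N. c *\<^sub>R S N x) \<longlonglongrightarrow> c *\<^sub>R x" by (intro tendsto_scaleR tendsto_const coef_lim)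
  then show "(\<lambda>N. \<Sum>i<N. (c * coef x i) *\<^sub>R e i) \<longlonglongrightarrow> c *\<^sub>R x"
    by (simp add: S_def scaleR_sum_right)
qed

lemma coef_zero: "coef 0 = (\<lambda>i. 0)"
  using coef_scale[of 0 0] by simp

lemma coef_minus: "coef (- x) = (\<lambda>i. - coef x i)"
  using coef_scale[of "-1" x] by simp

lemma coef_diff: "coef (x - y) = (\<lambda>i. coef x i - coef y i)"
  using coef_add[of x "-y"] by (simp add: coef_minus)

lemma S_add: "S N (x + y) = S N x + S N y"
  by (simp add: S_def coef_add scaleR_add_left sum.distrib)

lemma S_scale: "S N (c *\<^sub>R x) = c *\<^sub>R S N x"
  by (simp add: S_def coef_scale scaleR_sum_right)

lemma S_diff: "S N (x - y) = S N x - S N y"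
  by (simp add: S_def coef_diff scaleR_diff_left sum_subtractf)

lemma S_zero: "S N 0 = 0"
  by (simp add: S_def coef_zero)

lemma e_nonzero: "e i \<noteq> 0"
proof
  assume ei: "e i = 0"
  have "(\<lambda>N. \<Sum>j<N. (0::real) *\<^sub>R e j) \<longlonglongrightarrow> 0" by simp
  then have c1: "coef 0 = (\<lambda>j. 0)" by (rule coef_unique)
  have "(\<lambda>N. \<Sum>j<N. (if j = i then 1 else 0::real) *\<^sub>R e j) \<longlonglongrightarrow> 0"
  proof -
    have "(\<Sum>j<N. (if j = i then 1 else 0::real) *\<^sub>R e j) = 0" for N
      by (rule sum.neutral) (auto simp: ei)
    then show ?thesis by simp
  qed
  then have "coef 0 = (\<lambda>j. if j = i then 1 else 0)" by (rule coef_unique)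
  with c1 show False by (metis zero_neq_one)
qed

lemma coef_finite: "coef (\<Sum>i<M. c i *\<^sub>R e i) = (\<lambda>i. if i < M then c i else 0)"
proof (rule coef_unique)
  have "(\<Sum>i<N. (if i < M then c i else 0) *\<^sub>R e i) = (\<Sum>i<M. c i *\<^sub>R e i)" if "N \<ge> M" for N
  proof -
    have "(\<Sum>i<N. (if i < M then c i else 0) *\<^sub>R e i) = (\<Sum>i<M. (if i < M then c i else 0) *\<^sub>R e i)"
      using that by (intro sum.mono_neutral_right) auto
    then show ?thesis by simp
  qed
  then show "(\<lambda>N. \<Sum>i<N. (if i < M then c i else 0) *\<^sub>R e i) \<longlonglongrightarrow> (\<Sum>i<M. c i *\<^sub>R e i)"
    by (intro tendsto_eventually eventually_sequentiallyI[of M]) auto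
qed

lemma S_finite: "S N (\<Sum>i<M. c i *\<^sub>R e i) = (\<Sum>i<min N M. c i *\<^sub>R e i)"
proof -
  have "S N (\<Sum>i<M. c i *\<^sub>R e i) = (\<Sum>i<N. (if i < M then c i else 0) *\<^sub>R e i)"
    by (simp add: S_def coef_finite)
  also have "\<dots> = (\<Sum>i<min N M. (if i < M then c i else 0) *\<^sub>R e i)"
    by (intro sum.mono_neutral_right) auto
  also have "\<dots> = (\<Sum>i<min N M. c i *\<^sub>R e i)" by simp
  finally show ?thesis .
qed

lemma norm_le_of_S_bound: "(\<And>N. norm (S N y) \<le> M) \<Longrightarrow> norm y \<le> M"
  by (rule Lim_bounded[OF tendsto_norm[OF coef_lim]]) auto

lemma coef_bound: "(\<And>N. norm (S N y) \<le> M) \<Longrightarrow> \<bar>coef y i\<bar> * norm (e i) \<le> 2 * M"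
proof -
  assume h: "\<And>N. norm (S N y) \<le> M"
  have "S (Suc i) y - S i y = coef y i *\<^sub>R e i" by (simp add: S_def)
  then have "\<bar>coef y i\<bar> * norm (e i) = norm (S (Suc i) y - S i y)" by simp
  also have "\<dots> \<le> norm (S (Suc i) y) + norm (S i y)" by (rule norm_triangle_ineq4)
  also have "\<dots> \<le> 2 * M" using h[of "Suc i"] h[of i] by simp
  finally show ?thesis .
qed

end



lemma half_norm: "norm ((1/2) *\<^sub>R (a - b)) \<le> (1/2) * (norm a + norm (b::'b::real_normed_vector))"
  using norm_triangle_ineq4[of a b] by simp

context sbasis begin

definition Bn :: "nat \<Rightarrow> 'a set" where "Bn n = {x. \<forall>N. norm (S N x) \<le> real n}"

lemma Bn_cover: "\<exists>n. x \<in> Bn n"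
proof -
  have "Bseq (\<lambda>N. S N x)" by (rule convergent_imp_Bseq[OF convergentI[OF coef_lim]])
  then obtain K where K: "\<And>N. norm (S N x) \<le> K" by (auto simp: Bseq_def)
  obtain n where "K \<le> real n" using real_arch_simple by blast
  then have "x \<in> Bn n" using K order_trans unfolding Bn_def by blast
  then show ?thesis ..
qed

lemma baire_ball: "\<exists>n x0 r. r > 0 \<and> ball x0 r \<subseteq> closure (Bn n)"
proof (rule ccontr)
  assume nb: "\<not> ?thesis"
  have "euclidean interior_of \<Union>(range (\<lambda>n. closure (Bn n))) = {}"
  proof (rule Baire_category_alt)
    show "completely_metrizable_space (euclidean::'a topology) \<or> locally_compact_space (euclidean::'a topology) \<and> regular_space (euclidean::'a topology)"
      using completely_metrizable_space_euclidean by blast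
    show "countable (range (\<lambda>n. closure (Bn n)))" by simp
    fix T assume "T \<in> range (\<lambda>n. closure (Bn n))"
    then obtain n where T: "T = closure (Bn n)" by blast
    have "interior T = {}"
    proof (rule ccontr)
      assume "interior T \<noteq> {}"
      then obtain x where "x \<in> interior T" by blast
      then obtain r where "r > 0" "ball x r \<subseteq> T"
        by (meson open_contains_ball open_interior interior_subset subset_trans)
      with nb T show False by blast
    qed
    then show "closedin euclidean T \<and> euclidean interior_of T = {}"
      using T closed_closedin by auto
  qed
  moreover have "\<Union>(range (\<lambda>n. closure (Bn n))) = UNIV"
    using Bn_cover closure_subset by blast
  ultimately show False by simp
qed

lemma step: "\<exists>c\<ge>0. \<forall>x. \<exists>y. (\<forall>N. norm (S N y) \<le> c * norm x) \<and> norm (x - y) \<le> norm x / 2"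
proof -
  obtain n x0 r where r: "r > 0" "ball x0 r \<subseteq> closure (Bn n)" using baire_ball by blast
  have approx: "\<exists>y. (\<forall>N. norm (S N y) \<le> real n) \<and> norm (x - y) < \<epsilon>"
    if "norm x < r" "\<epsilon> > 0" for x \<epsilon>
  proof -
    have "x0 + x \<in> closure (Bn n)" "x0 - x \<in> closure (Bn n)"
      using r that by (auto simp: dist_norm subset_iff)
    then obtain y1 y2 where y: "y1 \<in> Bn n" "dist y1 (x0 + x) < \<epsilon>" "y2 \<in> Bn n" "dist y2 (x0 - x) < \<epsilon>"
      using \<open>\<epsilon> > 0\<close> unfolding closure_approachable by blast
    define y where "y = (1/2) *\<^sub>R (y1 - y2)"
    have "norm (S N y) \<le> real n" for N
    proof -
      have "S N y = (1/2) *\<^sub>R (S N y1 - S N y2)" by (simp add: y_def S_scale S_diff)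
      also have "norm \<dots> \<le> (1/2) * (norm (S N y1) + norm (S N y2))"
        by (rule half_norm)
      also have "\<dots> \<le> real n"
      proof -
        have "norm (S N y1) \<le> real n" "norm (S N y2) \<le> real n" using y(1,3) unfolding Bn_def by auto
        then show ?thesis by simp
      qed
      finally show ?thesis .
    qed
    moreover have "norm (x - y) < \<epsilon>"
    proof -
      have "x - y = (1/2) *\<^sub>R ((x0 + x - y1) - (x0 - x - y2))"
        by (simp add: y_def algebra_simps flip: scaleR_add_left)
      also have "norm \<dots> \<le> (1/2) * (norm (x0 + x - y1) + norm (x0 - x - y2))"
        by (rule half_norm)
      also have "\<dots> < \<epsilon>" using y(2,4) by (simp add: dist_norm norm_minus_commute)
      finally show ?thesis .
    qed
    ultimately show ?thesis by blast
  qed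
  define c where "c = 2 * real n / r"
  have c0: "c \<ge> 0" using r by (simp add: c_def)
  have "\<exists>y. (\<forall>N. norm (S N y) \<le> c * norm x) \<and> norm (x - y) \<le> norm x / 2" for x
  proof (cases "x = 0")
    case True
    then show ?thesis by (intro exI[of _ 0]) (simp add: S_zero)
  next
    case False
    then have nx: "norm x > 0" by simp
    define x' where "x' = (r / (2 * norm x)) *\<^sub>R x"
    have "norm x' = r / 2" using nx r by (simp add: x'_def)
    then have "norm x' < r" using r by simp
    then obtain y' where y': "\<And>N. norm (S N y') \<le> real n" "norm (x' - y') < r / 4"
      using approx[of x' "r/4"] r by auto
    define y where "y = (2 * norm x / r) *\<^sub>R y'"
    have "norm (S N y) \<le> c * norm x" for N
    proof -
      have "norm (S N y) = (2 * norm x / r) * norm (S N y')"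
        using nx r by (simp add: y_def S_scale)
      also have "\<dots> \<le> (2 * norm x / r) * real n"
        using y'(1) nx r by (intro mult_left_mono) auto
      also have "\<dots> = c * norm x" by (simp add: c_def)
      finally show ?thesis .
    qed
    moreover have "norm (x - y) \<le> norm x / 2"
    proof -
      have "x = (2 * norm x / r) *\<^sub>R x'" using nx r by (simp add: x'_def)
      then have "x - y = (2 * norm x / r) *\<^sub>R (x' - y')"
        by (simp add: y_def scaleR_diff_right)
      then have "norm (x - y) = (2 * norm x / r) * norm (x' - y')"
        using nx r by simp
      also have "\<dots> \<le> (2 * norm x / r) * (r / 4)"
        using y'(2) nx r by (intro mult_left_mono) auto
      also have "\<dots> = norm x / 2" using r by simp
      finally show ?thesis .
    qed
    ultimately show ?thesis by blast
  qed
  with c0 show ?thesis by blast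
qed

end



context sbasis begin

lemma norm3: "norm (a + b - c) \<le> norm a + norm b + norm (c::'b::real_normed_vector)"
  by (metis add_mono norm_triangle_ineq norm_triangle_ineq4 order_trans order_refl)

lemma S_sum_lessThan: "S N (\<Sum>k<(K::nat). f k) = (\<Sum>k<K. S N (f k))"
  by (induction K) (simp_all add: S_zero S_add)

lemma geom_half: "summable (\<lambda>k. (1/2::real)^k)" "(\<Sum>k. (1/2::real)^k) = 2"
  using summable_geometric[of "1/2::real"] suminf_geometric[of "1/2::real"] by simp_all

lemma basis_const: "\<exists>C\<ge>1. \<forall>N x. norm (S N x) \<le> C * norm x"
proof -
  obtain c where c0: "c \<ge> 0" and cst: "\<forall>x. \<exists>y. (\<forall>N. norm (S N y) \<le> c * norm x) \<and> norm (x - y) \<le> norm x / 2"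
    using step by blast
  then obtain g where g1: "\<And>x N. norm (S N (g x)) \<le> c * norm x"
    and g2: "\<And>x. norm (x - g x) \<le> norm x / 2" by metis
  have main: "norm (S N x) \<le> 2 * c * norm x" for N x
  proof -
    define rr where "rr k = ((\<lambda>v. v - g v) ^^ k) x" for k
    define y where "y k = g (rr k)" for k
    define \<beta> where "\<beta> k = c * norm x * (1/2)^k" for k
    have rr_Suc: "rr (Suc k) = rr k - y k" for k by (simp add: rr_def y_def)
    have rr_bd: "norm (rr k) \<le> norm x * (1/2)^k" for k
    proof (induction k)
      case 0 then show ?case by (simp add: rr_def)
    next
      case (Suc k)
      have "norm (rr (Suc k)) \<le> norm (rr k) / 2" using g2[of "rr k"] by (simp add: rr_Suc y_def)
      also have "\<dots> \<le> norm x * (1/2)^k / 2" using Suc by simp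
      finally show ?case by simp
    qed
    have Sy: "norm (S N (y k)) \<le> \<beta> k" for N k
    proof -
      have "norm (S N (y k)) \<le> c * norm (rr k)" using g1 by (simp add: y_def)
      also have "\<dots> \<le> c * (norm x * (1/2)^k)" using rr_bd c0 by (intro mult_left_mono) auto
      finally show ?thesis by (simp add: \<beta>_def)
    qed
    have \<beta>0: "\<beta> k \<ge> 0" for k using c0 by (simp add: \<beta>_def)
    have sumy: "(\<Sum>k<K. y k) = x - rr K" for K
    proof (induction K)
      case 0 then show ?case by (simp add: rr_def)
    next
      case (Suc K) then show ?case by (simp add: rr_Suc)
    qed
    have \<beta>_summ: "summable \<beta>" unfolding \<beta>_def by (intro summable_mult geom_half)
    have \<beta>_sum: "suminf \<beta> = 2 * c * norm x" unfolding \<beta>_def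
      by (subst suminf_mult[OF geom_half(1)]) (simp add: geom_half(2))
    have \<beta>_tail: "(\<Sum>k. \<beta> (k + K)) = 2 * c * norm x * (1/2)^K" for K
    proof -
      have "(\<lambda>k. \<beta> (k + K)) = (\<lambda>k. (c * norm x * (1/2)^K) * (1/2)^k)"
        by (simp add: \<beta>_def power_add mult_ac)
      then show ?thesis by (simp add: suminf_mult[OF geom_half(1)] geom_half(2))
    qed
    have \<beta>_tail_summ: "summable (\<lambda>k. \<beta> (k + K))" for K
      using \<beta>_summ by (simp add: summable_iff_shift)
    define b where "b i = (\<Sum>k. coef (y k) i)" for i
    have cb: "norm (coef (y k) i) \<le> 2 * \<beta> k / norm (e i)" for k i
    proof -
      have "\<bar>coef (y k) i\<bar> * norm (e i) \<le> 2 * \<beta> k" by (rule coef_bound[OF Sy])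
      then show ?thesis using e_nonzero[of i] by (simp add: field_simps)
    qed
    have summ_coef: "summable (\<lambda>k. coef (y k) i)" for i
    proof (rule summable_comparison_test)
      show "\<exists>N. \<forall>n\<ge>N. norm (coef (y n) i) \<le> 2 * \<beta> n / norm (e i)" using cb by blast
      show "summable (\<lambda>n. 2 * \<beta> n / norm (e i))"
        by (intro summable_divide summable_mult \<beta>_summ)
    qed
    have summ_Sn: "summable (\<lambda>k. norm (S N (y k)))" for N
      by (rule summable_comparison_test[OF _ \<beta>_summ]) (auto intro: Sy)
    have summ_S: "summable (\<lambda>k. S N (y k))" for N
      by (rule summable_norm_cancel[OF summ_Sn])
    have P: "(\<Sum>i<N. b i *\<^sub>R e i) = (\<Sum>k. S N (y k))" for N
    proof -
      have "(\<Sum>i<N. b i *\<^sub>R e i) = (\<Sum>i<N. \<Sum>k. coef (y k) i *\<^sub>R e i)"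
        unfolding b_def by (simp add: suminf_scaleR_left[OF summ_coef])
      also have "\<dots> = (\<Sum>k. \<Sum>i<N. coef (y k) i *\<^sub>R e i)"
        by (rule suminf_sum[symmetric]) (intro summable_scaleR_left summ_coef)
      finally show ?thesis by (simp add: S_def)
    qed
    have Pbd: "norm (\<Sum>k. S N (y k)) \<le> 2 * c * norm x" for N
    proof -
      have "norm (\<Sum>k. S N (y k)) \<le> (\<Sum>k. norm (S N (y k)))" by (rule summable_norm[OF summ_Sn])
      also have "\<dots> \<le> suminf \<beta>" by (rule suminf_le[OF Sy summ_Sn \<beta>_summ])
      finally show ?thesis by (simp add: \<beta>_sum)
    qed
    have Plim: "(\<lambda>N. \<Sum>k. S N (y k)) \<longlonglongrightarrow> x"
    proof (rule LIMSEQ_I)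
      fix \<epsilon> :: real assume \<epsilon>: "\<epsilon> > 0"
      have "(\<lambda>K. (2 * c + 1) * norm x * (1/2::real)^K) \<longlonglongrightarrow> (2 * c + 1) * norm x * 0"
        by (intro tendsto_mult tendsto_const LIMSEQ_power_zero) simp
      then have lim: "(\<lambda>K. (2 * c + 1) * norm x * (1/2::real)^K) \<longlonglongrightarrow> 0" by simp
      have "\<forall>\<^sub>F K in sequentially. (2 * c + 1) * norm x * (1/2::real)^K < \<epsilon> / 2"
        by (rule order_tendstoD(2)[OF lim]) (use \<epsilon> in simp)
      then obtain K where K: "(2 * c + 1) * norm x * (1/2::real)^K < \<epsilon> / 2"
        by (auto simp: eventually_sequentially)
      have "(\<lambda>N. S N (x - rr K) - (x - rr K)) \<longlonglongrightarrow> 0" by (intro LIM_zero coef_lim)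
      from LIMSEQ_D[OF this, of "\<epsilon>/2"] \<epsilon>
      have "\<exists>no. \<forall>n\<ge>no. norm (S n (x - rr K) - (x - rr K) - 0) < \<epsilon> / 2" by simp
      then obtain N0 where N0: "\<And>N. N \<ge> N0 \<Longrightarrow> norm (S N (x - rr K) - (x - rr K)) < \<epsilon> / 2"
        by auto
      show "\<exists>no. \<forall>n\<ge>no. norm ((\<Sum>k. S n (y k)) - x) < \<epsilon>"
      proof (intro exI allI impI)
        fix N assume "N \<ge> N0"
        have split: "(\<Sum>k. S N (y k)) = (\<Sum>k. S N (y (k + K))) + S N (x - rr K)"
        proof -
          have "(\<Sum>k<K. S N (y k)) = S N (x - rr K)"
            by (simp only: S_sum_lessThan[symmetric] sumy)
          with suminf_split_initial_segment[OF summ_S, of N K] show ?thesis by simp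
        qed
        have tail: "norm (\<Sum>k. S N (y (k + K))) \<le> 2 * c * norm x * (1/2)^K"
        proof -
          have sn: "summable (\<lambda>k. norm (S N (y (k + K))))"
            using summable_ignore_initial_segment[OF summ_Sn[of N], of K] by simp
          have "norm (\<Sum>k. S N (y (k + K))) \<le> (\<Sum>k. norm (S N (y (k + K))))"
            by (rule summable_norm[OF sn])
          also have "\<dots> \<le> (\<Sum>k. \<beta> (k + K))" by (rule suminf_le[OF Sy sn \<beta>_tail_summ])
          finally show ?thesis by (simp add: \<beta>_tail)
        qed
        have eq: "(\<Sum>k. S N (y k)) - x = (\<Sum>k. S N (y (k + K))) + (S N (x - rr K) - (x - rr K)) - rr K"
          unfolding split by simp
        have "norm ((\<Sum>k. S N (y k)) - x) \<le> norm (\<Sum>k. S N (y (k + K))) + norm (S N (x - rr K) - (x - rr K)) + norm (rr K)"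
          unfolding eq by (rule norm3)
        also have "\<dots> < 2 * c * norm x * (1/2)^K + \<epsilon> / 2 + norm x * (1/2)^K"
          using tail N0[OF \<open>N \<ge> N0\<close>] rr_bd[of K] by linarith
        also have "\<dots> = (2 * c + 1) * norm x * (1/2)^K + \<epsilon> / 2" by (simp add: algebra_simps)
        also have "\<dots> < \<epsilon>" using K by linarith
        finally show "norm ((\<Sum>k. S N (y k)) - x) < \<epsilon>" .
      qed
    qed
    then have "(\<lambda>N. \<Sum>i<N. b i *\<^sub>R e i) \<longlonglongrightarrow> x" by (simp add: P)
    then have "coef x = b" by (rule coef_unique)
    then have "S N x = (\<Sum>k. S N (y k))" by (simp add: S_def P)
    with Pbd show ?thesis by simp
  qed
  have "norm (S N x) \<le> max 1 (2 * c) * norm x" for N x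
  proof -
    have "2 * c * norm x \<le> max 1 (2 * c) * norm x" by (intro mult_right_mono) auto
    then show ?thesis using main[of N x] by linarith
  qed
  then show ?thesis by (intro exI[of _ "max 1 (2 * c)"]) auto
qed

end



lemma sum_split_add: "(\<Sum>i<k + N. f i) = (\<Sum>i<k. f i) + (\<Sum>j<N. f (k + j))" for f :: "nat \<Rightarrow> 'b::comm_monoid_add"
  by (induction N) (simp_all add: add_ac)

lemma inf_ker:
  fixes f :: "'a::real_vector \<Rightarrow> real"
  assumes Y: "inf_dim_subspace Y"
    and fadd: "\<And>x y. f (x + y) = f x + f y" and fscale: "\<And>c x. f (c *\<^sub>R x) = c * f x"
  shows "inf_dim_subspace {y\<in>Y. f y = 0}"
proof -
  have sY: "subspace Y" using Y by (simp add: inf_dim_subspace_def)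
  have f0: "f 0 = 0" using fscale[of 0 0] by simp
  have sub: "subspace {y\<in>Y. f y = 0}"
    using sY unfolding subspace_def by (auto simp: fadd fscale f0)
  have "\<not> (\<exists>B. finite B \<and> {y\<in>Y. f y = 0} = span B)"
  proof
    assume "\<exists>B. finite B \<and> {y\<in>Y. f y = 0} = span B"
    then obtain B where B: "finite B" "{y\<in>Y. f y = 0} = span B" by blast
    show False
    proof (cases "\<forall>y\<in>Y. f y = 0")
      case True
      then have "Y = span B" using B(2) by auto
      with B(1) Y show False by (auto simp: inf_dim_subspace_def)
    next
      case False
      then obtain y0 where y0: "y0 \<in> Y" "f y0 \<noteq> 0" by blast
      have "Y = span (insert y0 B)"
      proof
        show "Y \<subseteq> span (insert y0 B)"
        proof
          fix y assume "y \<in> Y"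
          define d where "d = y - (f y / f y0) *\<^sub>R y0"
          have "d \<in> Y" using \<open>y \<in> Y\<close> y0 sY by (simp add: d_def subspace_diff subspace_scale)
          moreover have "f d = 0"
          proof -
            have "d = y + (- (f y / f y0)) *\<^sub>R y0" by (simp add: d_def)
            then have "f d = f y + (- (f y / f y0)) * f y0" by (simp only: fadd fscale)
            then show ?thesis using y0 by simp
          qed
          ultimately have "d \<in> span B" using B(2) by blast
          then have "d \<in> span (insert y0 B)" by (meson span_mono subset_insertI subsetD)
          moreover have "(f y / f y0) *\<^sub>R y0 \<in> span (insert y0 B)" by (simp add: span_base span_scale)
          ultimately have "d + (f y / f y0) *\<^sub>R y0 \<in> span (insert y0 B)" by (rule span_add)
          then show "y \<in> span (insert y0 B)" by (simp add: d_def)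
        qed
        show "span (insert y0 B) \<subseteq> Y"
        proof (rule span_minimal)
          have "B \<subseteq> span B" by (rule span_superset)
          then have "B \<subseteq> Y" using B(2) by blast
          then show "insert y0 B \<subseteq> Y" using y0 by blast
        qed (rule sY)
      qed
      with B(1) Y show False by (auto simp: inf_dim_subspace_def)
    qed
  qed
  with sub show ?thesis by (simp add: inf_dim_subspace_def)
qed

context sbasis begin

lemma inf_dim_tail: "inf_dim_subspace Y \<Longrightarrow> inf_dim_subspace {y\<in>Y. \<forall>i<r. coef y i = 0}"
proof (induction r)
  case 0 then show ?case by simp
next
  case (Suc r)
  have "inf_dim_subspace {y\<in>{y\<in>Y. \<forall>i<r. coef y i = 0}. coef y r = 0}"
    by (rule inf_ker[OF Suc.IH[OF Suc.prems]]) (simp_all add: coef_add coef_scale)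
  moreover have "{y\<in>{y\<in>Y. \<forall>i<r. coef y i = 0}. coef y r = 0} = {y\<in>Y. \<forall>i<Suc r. coef y i = 0}"
    by (auto simp: less_Suc_eq)
  ultimately show ?case by simp
qed

lemma S_tail_zero: "(\<forall>i<r. coef w i = 0) \<Longrightarrow> S r w = 0"
  by (simp add: S_def)

end




locale blk = sbasis e for e :: "nat \<Rightarrow> 'a::banach" +
  fixes C :: real and z :: "nat \<Rightarrow> 'a" and p :: "nat \<Rightarrow> nat" and a :: "nat \<Rightarrow> real"
    and Y :: "'a set" and K0 :: real
  assumes C1: "C \<ge> 1" and SC: "\<And>N x. norm (S N x) \<le> C * norm x"
    and pmono: "strict_mono p" and zdef: "\<And>n. z n = (\<Sum>i\<in>{p n..<p (Suc n)}. a i *\<^sub>R e i)"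
    and znz: "\<And>n. z n \<noteq> 0"
    and Yinf: "inf_dim_subspace Y"
    and K01: "K0 \<ge> 1"
    and locmin: "\<And>(F::'a set) Y'. fin_dim_subspace F \<Longrightarrow> inf_dim_subspace Y' \<Longrightarrow> embeds_with_const F Y' K0"
begin

lemma z_alt: "z n = (\<Sum>i<p (Suc n). (if p n \<le> i then a i else 0) *\<^sub>R e i)"
proof -
  have "(\<Sum>i<p (Suc n). (if p n \<le> i then a i else 0) *\<^sub>R e i) = (\<Sum>i<p (Suc n). if p n \<le> i then a i *\<^sub>R e i else 0)"
    by (intro sum.cong) auto
  also have "\<dots> = sum (\<lambda>i. a i *\<^sub>R e i) {i\<in>{..<p (Suc n)}. p n \<le> i}" by (rule sum.inter_filter[symmetric]) simp
  also have "{i\<in>{..<p (Suc n)}. p n \<le> i} = {p n..<p (Suc n)}" by auto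
  finally show ?thesis by (simp add: zdef)
qed

lemma S_z_hi: "p (Suc n) \<le> q \<Longrightarrow> S q (z n) = z n"
  by (simp add: z_alt[of n] S_finite min_absorb2)

lemma S_z_lo: "q \<le> p n \<Longrightarrow> S q (z n) = 0"
  unfolding z_alt[of n] S_finite by (intro sum.neutral) auto

lemma S_comb: "S (p j) (\<Sum>n<k. c n *\<^sub>R z n) = (\<Sum>n<min j k. c n *\<^sub>R z n)"
proof -
  have "S (p j) (\<Sum>n<k. c n *\<^sub>R z n) = (\<Sum>n<k. c n *\<^sub>R S (p j) (z n))"
    by (simp add: S_sum_lessThan S_scale)
  also have "\<dots> = (\<Sum>n<k. if n < j then c n *\<^sub>R z n else 0)"
  proof (intro sum.cong refl)
    fix n
    show "c n *\<^sub>R S (p j) (z n) = (if n < j then c n *\<^sub>R z n else 0)"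
    proof (cases "n < j")
      case True
      then have "p (Suc n) \<le> p j" using pmono by (simp add: strict_mono_less_eq)
      then show ?thesis using True by (simp add: S_z_hi)
    next
      case False
      then have "p j \<le> p n" using pmono by (simp add: strict_mono_less_eq)
      then show ?thesis using False by (simp add: S_z_lo)
    qed
  qed
  also have "\<dots> = sum (\<lambda>n. c n *\<^sub>R z n) {n\<in>{..<k}. n < j}" by (rule sum.inter_filter[symmetric]) simp
  also have "{n\<in>{..<k}. n < j} = {..<min j k}" by auto
  finally show ?thesis .
qed

lemma z_split: "norm (\<Sum>n<k. c n *\<^sub>R z n) \<le> C * norm (\<Sum>n<k+N. c n *\<^sub>R z n)"
  using S_comb[where j=k and k="k+N" and c=c] SC[of "p k" "\<Sum>n<k+N. c n *\<^sub>R z n"] by simp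

lemma z_coef: "i < L \<Longrightarrow> \<bar>c i\<bar> * norm (z i) \<le> 2 * C * norm (\<Sum>n<L. c n *\<^sub>R z n)"
proof -
  assume iL: "i < L"
  define v where "v = (\<Sum>n<L. c n *\<^sub>R z n)"
  have "S (p (Suc i)) v - S (p i) v = c i *\<^sub>R z i"
    using iL by (simp add: v_def S_comb min_absorb1)
  then have "\<bar>c i\<bar> * norm (z i) = norm (S (p (Suc i)) v - S (p i) v)" by simp
  also have "\<dots> \<le> norm (S (p (Suc i)) v) + norm (S (p i) v)" by (rule norm_triangle_ineq4)
  also have "\<dots> \<le> C * norm v + C * norm v" using SC by (intro add_mono) auto
  finally show ?thesis by (simp add: v_def)
qed

definition good :: "real \<Rightarrow> 'a list \<Rightarrow> bool" where
  "good K vs \<longleftrightarrow> set vs \<subseteq> Y \<and> (\<forall>c.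
     (1/K) * norm (\<Sum>i<length vs. c i *\<^sub>R vs!i) \<le> norm (\<Sum>i<length vs. c i *\<^sub>R z i) \<and>
     norm (\<Sum>i<length vs. c i *\<^sub>R z i) \<le> K * norm (\<Sum>i<length vs. c i *\<^sub>R vs!i))"

lemma good_iff: "vs \<in> emb_tree z Y K \<longleftrightarrow> good K vs"
proof -
  have "(\<Sum>i<length vs. c i *\<^sub>R map z [0..<length vs] ! i) = (\<Sum>i<length vs. c i *\<^sub>R z i)" for c
    by (intro sum.cong) auto
  then show ?thesis unfolding emb_tree_def seq_equiv_def good_def by simp
qed

end



context blk begin

lemma T_sum:
  fixes T :: "'a \<Rightarrow> 'a" and N :: nat
  assumes sF: "subspace F" and Tadd: "\<forall>x\<in>F. \<forall>y\<in>F. T (x + y) = T x + T y"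
    and Tsc: "\<forall>c. \<forall>x\<in>F. T (c *\<^sub>R x) = c *\<^sub>R T x" and fF: "\<And>j. j < N \<Longrightarrow> f j \<in> F"
  shows "T (\<Sum>j<N. c j *\<^sub>R f j) = (\<Sum>j<N. c j *\<^sub>R T (f j))"
proof -
  have "T (0 *\<^sub>R 0) = 0 *\<^sub>R T 0" using Tsc sF subspace_0 by blast
  then have T0: "T 0 = 0" by simp
  have "M \<le> N \<Longrightarrow> T (\<Sum>j<M. c j *\<^sub>R f j) = (\<Sum>j<M. c j *\<^sub>R T (f j))" for M
  proof (induction M)
    case 0 then show ?case by (simp add: T0)
  next
    case (Suc M)
    have in1: "(\<Sum>j<M. c j *\<^sub>R f j) \<in> F" using Suc.prems fF sF
      by (intro subspace_sum subspace_scale) auto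
    have in2: "f M \<in> F" using Suc.prems fF by simp
    have in3: "c M *\<^sub>R f M \<in> F" using in2 sF by (simp add: subspace_scale)
    have "T (\<Sum>j<Suc M. c j *\<^sub>R f j) = T (\<Sum>j<M. c j *\<^sub>R f j) + T (c M *\<^sub>R f M)"
      using Tadd in1 in3 by simp
    also have "\<dots> = (\<Sum>j<M. c j *\<^sub>R T (f j)) + c M *\<^sub>R T (f M)"
      using Suc in2 Tsc by simp
    finally show ?case by simp
  qed
  then show ?thesis by simp
qed

lemma ext:
  assumes K: "K \<ge> 1" and g: "good K vs" and N: "N > 0"
  shows "\<exists>ws. length ws = N \<and> good (5 * C * (K + K0)) (vs @ ws)"
proof -
  define k where "k = length vs"
  define \<gamma> where "\<gamma> i = 2 * C * K / norm (z i)" for i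
  have Dlim: "(\<lambda>r. \<Sum>i<k. \<gamma> i * norm (vs!i - S r (vs!i))) \<longlonglongrightarrow> 0"
  proof -
    have "(\<lambda>r. vs!i - S r (vs!i)) \<longlonglongrightarrow> vs!i - vs!i" for i
      by (intro tendsto_diff tendsto_const coef_lim)
    then have "(\<lambda>r. norm (vs!i - S r (vs!i))) \<longlonglongrightarrow> 0" for i
      by (intro tendsto_norm_zero) simp
    then have "(\<lambda>r. \<Sum>i<k. \<gamma> i * norm (vs!i - S r (vs!i))) \<longlonglongrightarrow> (\<Sum>i<k. \<gamma> i * 0)"
      by (intro tendsto_sum tendsto_mult tendsto_const) auto
    then show ?thesis by simp
  qed
  have "\<forall>\<^sub>F r in sequentially. (\<Sum>i<k. \<gamma> i * norm (vs!i - S r (vs!i))) < 1/2"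
    by (rule order_tendstoD(2)[OF Dlim]) simp
  then obtain r where r: "(\<Sum>i<k. \<gamma> i * norm (vs!i - S r (vs!i))) < 1/2"
    by (auto simp: eventually_sequentially)
  have \<gamma>0: "\<gamma> i \<ge> 0" for i using C1 K by (simp add: \<gamma>_def)
  have tailu: "norm (u - S r u) \<le> norm u / 2" if u: "u = (\<Sum>i<k. c i *\<^sub>R vs!i)" for c u
  proof -
    have xb: "norm (\<Sum>i<k. c i *\<^sub>R z i) \<le> K * norm u"
      using g u unfolding good_def k_def by blast
    have ci: "\<bar>c i\<bar> \<le> \<gamma> i * norm u" if "i < k" for i
    proof -
      have "\<bar>c i\<bar> * norm (z i) \<le> 2 * C * norm (\<Sum>n<k. c n *\<^sub>R z n)" by (rule z_coef[OF that])
      also have "\<dots> \<le> 2 * C * (K * norm u)" using xb C1 by (intro mult_left_mono) auto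
      finally have "\<bar>c i\<bar> * norm (z i) \<le> 2 * C * K * norm u" by simp
      then show ?thesis using znz[of i] by (simp add: \<gamma>_def field_simps)
    qed
    have eq: "u - S r u = (\<Sum>i<k. c i *\<^sub>R (vs!i - S r (vs!i)))"
      by (simp add: u S_sum_lessThan S_scale scaleR_diff_right sum_subtractf)
    have "norm (u - S r u) \<le> (\<Sum>i<k. norm (c i *\<^sub>R (vs!i - S r (vs!i))))"
      unfolding eq by (rule norm_sum)
    also have "\<dots> = (\<Sum>i<k. \<bar>c i\<bar> * norm (vs!i - S r (vs!i)))" by simp
    also have "\<dots> \<le> (\<Sum>i<k. (\<gamma> i * norm u) * norm (vs!i - S r (vs!i)))"
      using ci by (intro sum_mono mult_right_mono) auto
    also have "\<dots> = norm u * (\<Sum>i<k. \<gamma> i * norm (vs!i - S r (vs!i)))"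
      by (simp add: sum_distrib_left mult_ac)
    also have "\<dots> \<le> norm u * (1/2)" using r by (intro mult_left_mono) auto
    finally show ?thesis by simp
  qed
  define Y' where "Y' = {y\<in>Y. \<forall>i<r. coef y i = 0}"
  have Y'inf: "inf_dim_subspace Y'" unfolding Y'_def by (rule inf_dim_tail[OF Yinf])
  then have sY': "subspace Y'" by (simp add: inf_dim_subspace_def)
  have Y'Y: "Y' \<subseteq> Y" by (auto simp: Y'_def)
  define F where "F = span (z ` {k..<k+N})"
  have sF: "subspace F" by (simp add: F_def)
  have Ffin: "fin_dim_subspace F" unfolding fin_dim_subspace_def F_def by auto
  obtain T A B where Tadd: "\<forall>x\<in>F. \<forall>y\<in>F. T (x + y) = T x + T y"
    and Tsc: "\<forall>c. \<forall>x\<in>F. T (c *\<^sub>R x) = c *\<^sub>R T x" and TF: "T ` F \<subseteq> Y'"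
    and AB: "A * B \<le> K0" and Tn: "\<forall>x\<in>F. norm (T x) \<le> A * norm x \<and> norm x \<le> B * norm (T x)"
    using locmin[OF Ffin Y'inf] unfolding embeds_with_const_def by blast
  have zF: "z (k + j) \<in> F" if "j < N" for j
    using that by (auto simp: F_def intro!: span_base)
  have A0: "A > 0"
  proof (rule ccontr)
    assume "\<not> A > 0"
    have zk: "z (k + 0) \<in> F" using zF N by blast
    then have "norm (T (z k)) \<le> A * norm (z k)" "norm (z k) \<le> B * norm (T (z k))" using Tn by auto
    moreover have "A * norm (z k) \<le> 0" using \<open>\<not> A > 0\<close> by (simp add: mult_nonpos_nonneg)
    ultimately have "norm (T (z k)) \<le> 0" by linarith
    then have "norm (T (z k)) = 0" using norm_ge_zero[of "T (z k)"] by linarith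
    then have "norm (z k) \<le> 0" using \<open>norm (z k) \<le> B * norm (T (z k))\<close> by simp
    with znz[of k] show False by simp
  qed
  define ws where "ws = map (\<lambda>j. (1/A) *\<^sub>R T (z (k + j))) [0..<N]"
  have ws_len: "length ws = N" by (simp add: ws_def)
  have ws_nth: "ws ! j = (1/A) *\<^sub>R T (z (k + j))" if "j < N" for j
    using that by (simp add: ws_def)
  have wsY: "set ws \<subseteq> Y"
  proof
    fix w assume "w \<in> set ws"
    then obtain j where j: "j < N" "w = (1/A) *\<^sub>R T (z (k + j))" by (auto simp: ws_def)
    have "T (z (k + j)) \<in> Y'" using TF zF[OF j(1)] by blast
    then have "w \<in> Y'" using j sY' by (simp add: subspace_scale)
    then show "w \<in> Y" using Y'Y by blast
  qed
  define K' where "K' = 5 * C * (K + K0)"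
  have main: "(1/K') * norm (\<Sum>i<k+N. c i *\<^sub>R (vs @ ws)!i) \<le> norm (\<Sum>i<k+N. c i *\<^sub>R z i) \<and>
      norm (\<Sum>i<k+N. c i *\<^sub>R z i) \<le> K' * norm (\<Sum>i<k+N. c i *\<^sub>R (vs @ ws)!i)" for c
  proof -
    define u where "u = (\<Sum>i<k. c i *\<^sub>R vs!i)"
    define w where "w = (\<Sum>j<N. c (k + j) *\<^sub>R ws!j)"
    define x where "x = (\<Sum>i<k. c i *\<^sub>R z i)"
    define y where "y = (\<Sum>j<N. c (k + j) *\<^sub>R z (k + j))"
    have sum1: "(\<Sum>i<k+N. c i *\<^sub>R (vs @ ws)!i) = u + w"
    proof -
      have "(\<Sum>i<k+N. c i *\<^sub>R (vs @ ws)!i) = (\<Sum>i<k. c i *\<^sub>R (vs @ ws)!i) + (\<Sum>j<N. c (k + j) *\<^sub>R (vs @ ws)!(k + j))"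
        by (rule sum_split_add)
      moreover have "(\<Sum>i<k. c i *\<^sub>R (vs @ ws)!i) = u"
        unfolding u_def by (intro sum.cong) (auto simp: nth_append k_def)
      moreover have "(\<Sum>j<N. c (k + j) *\<^sub>R (vs @ ws)!(k + j)) = w"
        unfolding w_def by (intro sum.cong) (auto simp: nth_append k_def)
      ultimately show ?thesis by simp
    qed
    have sum2: "(\<Sum>i<k+N. c i *\<^sub>R z i) = x + y"
      unfolding x_def y_def by (rule sum_split_add)
    have yF: "y \<in> F" unfolding y_def using zF sF by (intro subspace_sum subspace_scale) auto
    have wTy: "w = (1/A) *\<^sub>R T y"
    proof -
      have "T y = (\<Sum>j<N. c (k + j) *\<^sub>R T (z (k + j)))"
        unfolding y_def by (rule T_sum[OF sF Tadd Tsc zF])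
      then have "(1/A) *\<^sub>R T y = (\<Sum>j<N. c (k + j) *\<^sub>R ((1/A) *\<^sub>R T (z (k + j))))"
        by (simp add: scaleR_sum_right)
      also have "\<dots> = w" unfolding w_def by (intro sum.cong) (auto simp: ws_nth)
      finally show ?thesis by simp
    qed
    have nw: "norm w \<le> norm y"
    proof -
      have "norm (T y) \<le> A * norm y" using Tn yF by blast
      then show ?thesis using A0 by (simp add: wTy field_simps)
    qed
    have ny: "norm y \<le> K0 * norm w"
    proof -
      have "norm y \<le> B * norm (T y)" using Tn yF by blast
      also have "norm (T y) = A * norm w" using A0 by (simp add: wTy)
      finally have "norm y \<le> (A * B) * norm w" by (simp add: mult_ac)
      also have "\<dots> \<le> K0 * norm w" using AB by (intro mult_right_mono) auto
      finally show ?thesis .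
    qed
    have wY': "w \<in> Y'"
    proof -
      have "T y \<in> Y'" using TF yF by blast
      then show ?thesis using sY' by (simp add: wTy subspace_scale)
    qed
    have Srw: "S r w = 0" using wY' by (intro S_tail_zero) (auto simp: Y'_def)
    have nu: "norm u \<le> 2 * C * norm (u + w)"
    proof -
      have "S r (u + w) = S r u" by (simp add: S_add Srw)
      then have "norm (S r u) \<le> C * norm (u + w)" using SC[of r "u + w"] by simp
      moreover have "norm (u - S r u) \<le> norm u / 2" by (rule tailu[OF u_def])
      moreover have "norm u \<le> norm (S r u) + norm (u - S r u)"
        using norm_triangle_ineq[of "S r u" "u - S r u"] by simp
      ultimately show ?thesis by linarith
    qed
    have nw2: "norm w \<le> (2 * C + 1) * norm (u + w)"
    proof -
      have "norm w \<le> norm (u + w) + norm u" using norm_triangle_ineq4[of "u + w" u] by simp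
      then show ?thesis using nu by (simp add: algebra_simps)
    qed
    have nx: "norm x \<le> C * norm (x + y)"
      using z_split[where k=k and c=c and N=N] by (simp add: x_def y_def sum_split_add)
    have ny2: "norm y \<le> (C + 1) * norm (x + y)"
    proof -
      have "norm y \<le> norm (x + y) + norm x" using norm_triangle_ineq4[of "x + y" x] by simp
      then show ?thesis using nx by (simp add: algebra_simps)
    qed
    have gx: "norm x \<le> K * norm u" and gu0: "(1/K) * norm u \<le> norm x"
      using g unfolding good_def u_def x_def k_def by blast+
    have gu: "norm u \<le> K * norm x" using gu0 K by (simp add: field_simps)
    have C0: "C \<ge> 0" using C1 by simp
    have K'pos: "K' > 0" using C1 K K01 by (simp add: K'_def)
    have up: "norm (u + w) \<le> K' * norm (x + y)"
    proof -
      have "norm (u + w) \<le> norm u + norm w" by (rule norm_triangle_ineq)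
      also have "\<dots> \<le> K * norm x + norm y" using gu nw by simp
      also have "\<dots> \<le> K * (C * norm (x + y)) + (C + 1) * norm (x + y)"
        using nx ny2 K by (intro add_mono mult_left_mono) auto
      also have "\<dots> = (K * C + C + 1) * norm (x + y)" by (simp add: algebra_simps)
      also have "\<dots> \<le> K' * norm (x + y)"
      proof (intro mult_right_mono)
        have "C \<le> C * K0" using C1 K01 by simp
        moreover have "1 \<le> C * K0" using mult_mono[of 1 C 1 K0] C1 K01 by simp
        moreover have "C \<le> C * K" using C1 K by simp
        moreover have "K'= 5 * (C * K) + 5 * (C * K0)" by (simp add: K'_def algebra_simps)
        moreover have "K * C = C * K" "0 \<le> C * K" using C1 K by (simp_all add: mult.commute)
        ultimately show "K * C + C + 1 \<le> K'" by linarith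
      qed simp
      finally show ?thesis .
    qed
    have lo: "norm (x + y) \<le> K' * norm (u + w)"
    proof -
      have "norm (x + y) \<le> norm x + norm y" by (rule norm_triangle_ineq)
      also have "\<dots> \<le> K * norm u + K0 * norm w" using gx ny by simp
      also have "\<dots> \<le> K * (2 * C * norm (u + w)) + K0 * ((2 * C + 1) * norm (u + w))"
        using nu nw2 K K01 by (intro add_mono mult_left_mono) auto
      also have "\<dots> = (2 * C * K + 2 * C * K0 + K0) * norm (u + w)" by (simp add: algebra_simps)
      also have "\<dots> \<le> K' * norm (u + w)"
      proof (intro mult_right_mono)
        have "K0 \<le> C * K0" using C1 K01 by simp
        moreover have "0 \<le> C * K" using C1 K by simp
        moreover have "0 \<le> C * K0" using C1 K01 by simp
        moreover have "K'= 5 * (C * K) + 5 * (C * K0)" by (simp add: K'_def algebra_simps)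
        moreover have "2 * C * K = 2 * (C * K)" "2 * C * K0 = 2 * (C * K0)" by simp_all
        ultimately show "2 * C * K + 2 * C * K0 + K0 \<le> K'" by linarith
      qed simp
      finally show ?thesis .
    qed
    show ?thesis unfolding sum1 sum2 using up lo K'pos by (simp add: field_simps)
  qed
  show ?thesis
  proof (intro exI conjI)
    show "length ws = N" by (rule ws_len)
    show "good (5 * C * (K + K0)) (vs @ ws)"
      unfolding good_def
    proof (intro conjI allI)
      show "set (vs @ ws) \<subseteq> Y" using g wsY by (auto simp: good_def)
    next
      fix c
      show "1 / (5 * C * (K + K0)) * norm (\<Sum>i<length (vs @ ws). c i *\<^sub>R (vs @ ws) ! i) \<le> norm (\<Sum>i<length (vs @ ws). c i *\<^sub>R z i)"
        using main[of c] by (simp add: k_def ws_len K'_def)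
    next
      fix c
      show "norm (\<Sum>i<length (vs @ ws). c i *\<^sub>R z i) \<le> 5 * C * (K + K0) * norm (\<Sum>i<length (vs @ ws). c i *\<^sub>R (vs @ ws) ! i)"
        using main[of c] by (simp add: k_def ws_len K'_def)
    qed
  qed
qed

end



lemma L1:
  fixes T :: "'b list set"
  assumes pc: "\<And>s t. t \<in> T \<Longrightarrow> prefix s t \<Longrightarrow> s \<in> T"
  shows "prefix t t' \<Longrightarrow> t' \<in> T \<Longrightarrow> length t' = length t + n \<Longrightarrow> rho_ge T m 0 t' \<Longrightarrow> rho_ge T m n t"
proof (induction n arbitrary: t)
  case 0
  have "prefix t' t" using prefix_length_prefix[OF prefix_order.refl[of t'] 0(1)] 0(3) by simp
  then have "t = t'" using 0(1) by (rule prefix_order.antisym[rotated])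
  then show ?case using 0 by simp
next
  case (Suc n)
  define t'' where "t'' = take (Suc (length t)) t'"
  have p1: "prefix t'' t'" by (simp add: t''_def take_is_prefix)
  have lt'': "length t'' = Suc (length t)" using Suc.prems(3) by (simp add: t''_def)
  have p2: "prefix t t''" using prefix_length_prefix[OF Suc.prems(1) p1] lt'' by simp
  have sp: "strict_prefix t t''" using p2 lt'' by (auto simp: strict_prefix_def)
  have t''T: "t'' \<in> T" using pc[OF Suc.prems(2) p1] .
  have tT: "t \<in> T" using pc[OF Suc.prems(2) Suc.prems(1)] .
  have "rho_ge T m n t''"
    using Suc.IH[OF p1 Suc.prems(2) _ Suc.prems(4)] Suc.prems(3) lt'' by simp
  then show ?case using tT t''T sp by auto
qed

context blk begin

definition Kf :: "real \<Rightarrow> real" where "Kf K = 5 * C * (K + K0)"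
definition Ks :: "nat \<Rightarrow> real" where "Ks j = (Kf ^^ j) 1"

lemma Kf_ge: "K \<ge> 1 \<Longrightarrow> Kf K \<ge> K"
proof -
  assume K: "K \<ge> 1"
  have "K \<le> C * K" using C1 K by simp
  moreover have "0 \<le> C * K0" using C1 K01 by simp
  moreover have "Kf K = 5 * (C * K) + 5 * (C * K0)" by (simp add: Kf_def algebra_simps)
  ultimately show ?thesis using K by linarith
qed

lemma Ks_Suc: "Ks (Suc j) = Kf (Ks j)" by (simp add: Ks_def)

lemma Ks_ge1: "Ks j \<ge> 1"
proof (induction j)
  case 0 then show ?case by (simp add: Ks_def)
next
  case (Suc j) then show ?case using Kf_ge[OF Suc] by (simp add: Ks_Suc)
qed

lemma Ks_mono: "j \<le> j' \<Longrightarrow> Ks j \<le> Ks j'"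
  by (rule lift_Suc_mono_le[of Ks]) (auto simp: Ks_Suc intro: Kf_ge Ks_ge1)

lemma good_mono: "good K vs \<Longrightarrow> 1 \<le> K \<Longrightarrow> K \<le> K' \<Longrightarrow> good K' vs"
proof -
  assume g: "good K vs" and K: "1 \<le> K" and KK: "K \<le> K'"
  show "good K' vs" unfolding good_def
  proof (intro conjI allI)
    show "set vs \<subseteq> Y" using g by (simp add: good_def)
  next
    fix c
    let ?u = "norm (\<Sum>i<length vs. c i *\<^sub>R vs!i)" and ?x = "norm (\<Sum>i<length vs. c i *\<^sub>R z i)"
    have h1: "(1/K) * ?u \<le> ?x" and h2: "?x \<le> K * ?u" using g by (auto simp: good_def)
    have "(1/K') * ?u \<le> (1/K) * ?u" using K KK by (intro mult_right_mono divide_left_mono) auto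
    then show "(1/K') * ?u \<le> ?x" using h1 by linarith
    have "K * ?u \<le> K' * ?u" using KK by (intro mult_right_mono) auto
    then show "?x \<le> K' * ?u" using h2 by linarith
  qed
qed

lemma good_prefix: "good K vs \<Longrightarrow> prefix ws vs \<Longrightarrow> good K ws"
proof -
  assume g: "good K vs" and p: "prefix ws vs"
  then obtain zs where vs: "vs = ws @ zs" by (auto elim: prefixE)
  show "good K ws" unfolding good_def
  proof (intro conjI allI)
    show "set ws \<subseteq> Y" using g vs by (auto simp: good_def)
  next
    fix c
    define c' where "c' i = (if i < length ws then c i else (0::real))" for i
    have e1: "(\<Sum>i<length vs. c' i *\<^sub>R vs!i) = (\<Sum>i<length ws. c i *\<^sub>R ws!i)"
    proof -
      have "(\<Sum>i<length vs. c' i *\<^sub>R vs!i) = (\<Sum>i<length ws. c' i *\<^sub>R vs!i)"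
        by (rule sum.mono_neutral_right) (auto simp: c'_def vs)
      also have "\<dots> = (\<Sum>i<length ws. c i *\<^sub>R ws!i)"
        by (intro sum.cong) (auto simp: c'_def vs nth_append)
      finally show ?thesis .
    qed
    have e2: "(\<Sum>i<length vs. c' i *\<^sub>R z i) = (\<Sum>i<length ws. c i *\<^sub>R z i)"
    proof -
      have "(\<Sum>i<length vs. c' i *\<^sub>R z i) = (\<Sum>i<length ws. c' i *\<^sub>R z i)"
        by (rule sum.mono_neutral_right) (auto simp: c'_def vs)
      also have "\<dots> = (\<Sum>i<length ws. c i *\<^sub>R z i)"
        by (intro sum.cong) (auto simp: c'_def)
      finally show ?thesis .
    qed
    have "(1/K) * norm (\<Sum>i<length vs. c' i *\<^sub>R vs!i) \<le> norm (\<Sum>i<length vs. c' i *\<^sub>R z i) \<and>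
       norm (\<Sum>i<length vs. c' i *\<^sub>R z i) \<le> K * norm (\<Sum>i<length vs. c' i *\<^sub>R vs!i)"
      using g by (simp add: good_def)
    then show "(1/K) * norm (\<Sum>i<length ws. c i *\<^sub>R ws!i) \<le> norm (\<Sum>i<length ws. c i *\<^sub>R z i)"
      and "norm (\<Sum>i<length ws. c i *\<^sub>R z i) \<le> K * norm (\<Sum>i<length ws. c i *\<^sub>R ws!i)"
      unfolding e1 e2 by auto
  qed
qed

lemma good_Nil: "good 1 []" by (simp add: good_def)

lemma ext_tree:
  assumes "good K vs" "1 \<le> K"
  shows "\<exists>vs'. good (Kf K) vs' \<and> prefix vs vs' \<and> length vs' = length vs + n"
proof (cases "n = 0")
  case True
  then show ?thesis using assms Kf_ge[OF assms(2)] by (intro exI[of _ vs]) (auto intro: good_mono)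
next
  case False
  then obtain ws where "length ws = n" "good (5 * C * (K + K0)) (vs @ ws)"
    using ext[OF assms(2) assms(1)] by blast
  then show ?thesis by (intro exI[of _ "vs @ ws"]) (auto simp: Kf_def)
qed

lemma Q: "j + m + 1 \<le> M \<Longrightarrow> good (Ks j) t \<Longrightarrow> rho_ge (emb_tree z Y (Ks M)) m n t"
proof (induction m arbitrary: j t n)
  case 0
  obtain t' where t': "good (Ks (Suc j)) t'" "prefix t t'" "length t' = length t + n"
    using ext_tree[OF 0(2) Ks_ge1] by (auto simp: Ks_Suc)
  have t'T: "t' \<in> emb_tree z Y (Ks M)"
    using good_mono[OF t'(1) Ks_ge1 Ks_mono[of "Suc j" M]] 0(1) by (simp add: good_iff)
  show ?case
  proof (rule L1[OF _ t'(2) t'T t'(3)])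
    show "\<And>s t. t \<in> emb_tree z Y (Ks M) \<Longrightarrow> prefix s t \<Longrightarrow> s \<in> emb_tree z Y (Ks M)"
      by (simp add: good_iff good_prefix)
    show "rho_ge (emb_tree z Y (Ks M)) 0 0 t'" using t'T by simp
  qed
next
  case (Suc m)
  obtain t' where t': "good (Ks (Suc j)) t'" "prefix t t'" "length t' = length t + n"
    using ext_tree[OF Suc.prems(2) Ks_ge1] by (auto simp: Ks_Suc)
  have t'T: "t' \<in> emb_tree z Y (Ks M)"
    using good_mono[OF t'(1) Ks_ge1 Ks_mono[of "Suc j" M]] Suc.prems(1) by (simp add: good_iff)
  show ?case
  proof (rule L1[OF _ t'(2) t'T t'(3)])
    show "\<And>s t. t \<in> emb_tree z Y (Ks M) \<Longrightarrow> prefix s t \<Longrightarrow> s \<in> emb_tree z Y (Ks M)"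
      by (simp add: good_iff good_prefix)
    have "rho_ge (emb_tree z Y (Ks M)) m n' t'" for n'
      using Suc.IH[of "Suc j" t' n'] Suc.prems(1) t'(1) by simp
    then show "rho_ge (emb_tree z Y (Ks M)) (Suc m) 0 t'" using t'T by simp
  qed
qed

lemma Emb: "Emb_ge_omega2 z Y"
  unfolding Emb_ge_omega2_def
proof (intro disjI2 allI)
  fix m n
  have g0: "good (Ks 0) []" by (simp add: Ks_def good_Nil)
  have "rho_ge (emb_tree z Y (Ks (m + 1))) m n []" by (rule Q[OF _ g0]) simp
  moreover have "[] \<in> emb_tree z Y (Ks (m + 1))"
    using good_mono[OF g0 Ks_ge1 Ks_mono[of 0 "m+1"]] by (simp add: good_iff)
  ultimately have "rank_gt (emb_tree z Y (Ks (m + 1))) m n" unfolding rank_gt_def by blast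
  then show "\<exists>K\<ge>1. rank_gt (emb_tree z Y K) m n" using Ks_ge1 by blast
qed

end

theorem proposition1p4:
  fixes e :: "nat \<Rightarrow> 'a::banach"
  assumes "schauder_basis e"
    and "locally_minimal (UNIV :: 'a set)"
  shows "omega2_minimal e"
proof -
  interpret sbasis e using assms(1) by unfold_locales
  obtain C where C: "C \<ge> 1" "\<And>N x. norm (S N x) \<le> C * norm x" using basis_const by blast
  obtain K0 where K0: "K0 \<ge> 1" and K0m: "\<forall>F Y. fin_dim_subspace F \<longrightarrow> F \<subseteq> (UNIV::'a set) \<longrightarrow>
      inf_dim_subspace Y \<longrightarrow> Y \<subseteq> UNIV \<longrightarrow> embeds_with_const F Y K0"
    using assms(2) unfolding locally_minimal_def by blast
  show ?thesis unfolding omega2_minimal_def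
  proof (intro allI impI)
    fix z :: "nat \<Rightarrow> 'a" and Y :: "'a set" assume bb: "block_basis e z" and "closed Y" and Yi: "inf_dim_subspace Y"
    obtain p a where p: "strict_mono p" and za: "\<And>n. z n = (\<Sum>i\<in>{p n..<p (Suc n)}. a i *\<^sub>R e i)"
      and znz: "\<And>n. z n \<noteq> 0"
      using bb unfolding block_basis_def by blast
    interpret blk e C z p a Y K0
      by unfold_locales (use C K0 K0m p za znz Yi in auto)
    show "Emb_ge_omega2 z Y" by (rule Emb)
  qed
qed


end
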